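(* Let $d\ge1$ and $\Box^d\subset\mathbb R^d$ be the $d$-cube. For $1\le i\le d$ let $a_i$ be the facet $\{x\in\Box^d:x_i=1\}$ and $a_{-i}$ the facet $\{x\in\Box^d:x_i=-1\}$. Then the face monoid of $\Box^d$ has a presentation with generators $a_{\pm1},\dots,a_{\pm d}$ and relations $a_i^2=a_i$ for all $i$; $a_ia_j=a_ja_i$ for all $i,j\in\{\pm1,\dots,\pm d\}$; and $a_ia_{-i}=a_ia_{-i}a_j$ for all $i\in\{1,\dots,d\}$ and all $j\in\{\pm1,\dots,\pm d\}$.
   Context: $\Box^d$ is the convex hull of $\{\sum_i\varepsilon_iv_i:\varepsilon_i=\pm1\}$ where $v_1,\dots,v_d$ is the standard basis. The face monoid of a polytope is the set of its faces (including the polytope itself and $\varnothing$) under intersection. *)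

theory Defs
  imports "HOL-Analysis.Analysis"
begin

definition cube :: "(real ^ 'n) set" where
  "cube = convex hull {(\<Sum>i\<in>UNIV. \<epsilon> i *\<^sub>R axis i (1::real)) | \<epsilon>. \<forall>i. \<epsilon> i = 1 \<or> \<epsilon> i = -1}"

text \<open>Generators: a generator (i, True) is a_i, the generator (i, False) is a_{-i}.\<close>
type_synonym 'n gen = "'n \<times> bool"

definition facet :: "'n gen \<Rightarrow> (real ^ 'n) set" where
  "facet g = {x \<in> cube. x $ fst g = (if snd g then 1 else -1)}"

text \<open>The face monoid: all faces of the cube (including the empty set and the cube), under intersection.\<close>
definition face_monoid :: "(real ^ 'n) set set" where
  "face_monoid = {F. F face_of (cube :: (real ^ 'n) set)}"

definition eval_word :: "'n gen list \<Rightarrow> (real ^ 'n) set" where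
  "eval_word w = foldr (\<lambda>g F. facet g \<inter> F) w cube"

inductive cube_rel :: "'n gen list \<Rightarrow> 'n gen list \<Rightarrow> bool" where
  idem: "cube_rel [g, g] [g]"
| comm: "cube_rel [g, h] [h, g]"
| absorb: "cube_rel [(i, True), (i, False)] [(i, True), (i, False), j]"

inductive cong_gen :: "('a list \<Rightarrow> 'a list \<Rightarrow> bool) \<Rightarrow> 'a list \<Rightarrow> 'a list \<Rightarrow> bool"
  for R where
  base: "R u v \<Longrightarrow> cong_gen R (x @ u @ y) (x @ v @ y)"
| refl: "cong_gen R u u"
| sym: "cong_gen R u v \<Longrightarrow> cong_gen R v u"
| trans: "cong_gen R u v \<Longrightarrow> cong_gen R v w \<Longrightarrow> cong_gen R u w"

end

theory Submission
  imports Defs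
begin


definition B :: "(real^'n) set" where "B = {x. \<forall>i. \<bar>x$i\<bar> \<le> 1}"

lemma B_cbox: "B = cbox (-1) 1"
  by (auto simp: B_def mem_box_cart abs_le_iff)

lemma vert_comp: "(\<Sum>i\<in>UNIV. \<epsilon> i *\<^sub>R axis i (1::real)) $ k = \<epsilon> k"
proof -
  have "(\<Sum>i\<in>UNIV. \<epsilon> i *\<^sub>R axis i (1::real)) $ k = (\<Sum>i\<in>UNIV. (if i = k then \<epsilon> i else 0))"
    unfolding sum_component by (intro sum.cong) (auto simp: axis_def)
  then show ?thesis by simp
qed

lemma cube_sub: "cube \<subseteq> (B :: (real^'n) set)"
  unfolding cube_def
proof (rule hull_minimal)
  show "convex (B :: (real^'n) set)" by (simp add: B_cbox convex_box)
  show "{\<Sum>i\<in>UNIV. \<epsilon> i *\<^sub>R axis i (1::real) |\<epsilon>. \<forall>i. \<epsilon> i = 1 \<or> \<epsilon> i = - 1} \<subseteq> (B :: (real^'n) set)"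
  proof clarify
    fix \<epsilon> :: "'n \<Rightarrow> real" assume h: "\<forall>i. \<epsilon> i = 1 \<or> \<epsilon> i = - 1"
    show "(\<Sum>i\<in>UNIV. \<epsilon> i *\<^sub>R axis i (1::real)) \<in> (B :: (real^'n) set)"
      unfolding B_def mem_Collect_eq vert_comp
    proof
      fix i
      from h have "\<epsilon> i = 1 \<or> \<epsilon> i = - 1" by blast
      then show "\<bar>\<epsilon> i\<bar> \<le> 1" by auto
    qed
  qed
qed

lemma aux_add: "(x::'a::ab_group_add) + y + (x - y) = x + x"
  by (simp add: algebra_simps)

lemma extreme_B:
  assumes "(x::real^'n) extreme_point_of B"
  shows "x$k = 1 \<or> x$k = -1"
proof (rule ccontr)
  assume nk: "\<not> (x$k = 1 \<or> x$k = -1)"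
  have xB: "x \<in> B" using assms by (simp add: extreme_point_of_def)
  have "\<bar>x$k\<bar> \<le> 1" using xB unfolding B_def by auto
  then have "\<bar>x$k\<bar> < 1" using nk by (auto simp: abs_if split: if_splits)
  define d where "d = 1 - \<bar>x$k\<bar>"
  have d: "d > 0" using \<open>\<bar>x$k\<bar> < 1\<close> by (simp add: d_def)
  define a where "a = x + d *\<^sub>R axis k 1"
  define b where "b = x - d *\<^sub>R axis k 1"
  have aB: "a \<in> B" unfolding B_def
  proof (intro CollectI allI)
    fix i
    have "\<bar>x$i\<bar> \<le> 1" using xB unfolding B_def by auto
    then show "\<bar>a$i\<bar> \<le> 1" unfolding a_def d_def using \<open>\<bar>x$k\<bar> < 1\<close>
      by (cases "i = k") (auto simp: axis_def abs_if)
  qed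
  have bB: "b \<in> B" unfolding B_def
  proof (intro CollectI allI)
    fix i
    have "\<bar>x$i\<bar> \<le> 1" using xB unfolding B_def by auto
    then show "\<bar>b$i\<bar> \<le> 1" unfolding b_def d_def using \<open>\<bar>x$k\<bar> < 1\<close>
      by (cases "i = k") (auto simp: axis_def abs_if)
  qed
  have "a \<noteq> b"
  proof
    assume "a = b" then have "a$k = b$k" by simp
    then show False using d by (simp add: a_def b_def axis_def)
  qed
  then have "midpoint a b \<in> open_segment a b" by simp
  moreover have "midpoint a b = x"
  proof -
    have "a + b = x + x" unfolding a_def b_def by (rule aux_add)
    also have "\<dots> = 2 *\<^sub>R x" by (rule scaleR_2[symmetric])
    finally have "a + b = 2 *\<^sub>R x" .
    then show ?thesis unfolding midpoint_def by simp
  qed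
  ultimately have xin: "x \<in> open_segment a b" by simp
  have "x \<notin> open_segment a b" using assms aB bB unfolding extreme_point_of_def by blast
  then show False using xin by contradiction
qed

lemma cube_eq: "cube = (B :: (real^'n) set)"
proof
  show "cube \<subseteq> B" by (rule cube_sub)
  have "(B :: (real^'n) set) = convex hull {x. x extreme_point_of (B :: (real^'n) set)}"
    by (rule Krein_Milman_Minkowski) (simp_all add: B_cbox convex_box)
  also have "\<dots> \<subseteq> cube" unfolding cube_def
  proof (rule hull_mono, clarify)
    fix x :: "real^'n" assume x: "x extreme_point_of B"
    have "x = (\<Sum>i\<in>UNIV. (x$i) *\<^sub>R axis i (1::real))"
      using basis_expansion[of x] by (simp add: scalar_mult_eq_scaleR)
    then show "\<exists>\<epsilon>. x = (\<Sum>i\<in>UNIV. \<epsilon> i *\<^sub>R axis i (1::real)) \<and> (\<forall>i. \<epsilon> i = 1 \<or> \<epsilon> i = - 1)"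
      using extreme_B[OF x] by blast
  qed
  finally show "(B :: (real^'n) set) \<subseteq> cube" .
qed

definition val :: "'n gen \<Rightarrow> real" where "val g = (if snd g then 1 else -1)"

lemma facet_eq: "facet g = {x \<in> B. x $ fst g = val g}"
  by (simp add: facet_def cube_eq val_def)

lemma eval_eq: "eval_word w = {x \<in> B. \<forall>g\<in>set w. x $ fst g = val g}"
  by (induction w) (auto simp: eval_word_def cube_eq facet_eq)

definition conflict :: "'n gen list \<Rightarrow> bool" where
  "conflict w \<longleftrightarrow> (\<exists>i. (i,True) \<in> set w \<and> (i,False) \<in> set w)"

definition wit :: "'n gen list \<Rightarrow> real^'n" where
  "wit v = (\<chi> j. if (j,True) \<in> set v then 1 else if (j,False) \<in> set v then -1 else 0)"

lemma bool_pair: "(a,b) \<in> S \<Longrightarrow> (a,False) \<notin> S \<Longrightarrow> (a,True) \<in> S"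
  by (cases b) auto

lemma wit_in: assumes nc: "\<not> conflict v" shows "wit v \<in> eval_word v"
  unfolding eval_eq
proof (intro CollectI conjI ballI)
  show "wit v \<in> B" unfolding B_def wit_def by auto
  fix g assume g: "g \<in> set v"
  obtain a b where ab: "g = (a,b)" by (cases g)
  show "wit v $ fst g = val g"
  proof (cases b)
    case True then show ?thesis using g ab by (simp add: wit_def val_def)
  next
    case False
    then have "(a,True) \<notin> set v" using nc g ab unfolding conflict_def by auto
    then show ?thesis using g ab False by (simp add: wit_def val_def)
  qed
qed

lemma eval_empty: "eval_word w = {} \<longleftrightarrow> conflict w"
proof
  assume e: "eval_word w = {}" show "conflict w"
  proof (rule ccontr)
    assume "\<not> conflict w"
    then have "wit w \<in> eval_word w" by (rule wit_in)
    then show False using e by simp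
  qed
next
  assume "conflict w"
  then obtain i where i: "(i,True) \<in> set w" "(i,False) \<in> set w" unfolding conflict_def by blast
  show "eval_word w = {}"
  proof (rule ccontr)
    assume "eval_word w \<noteq> {}"
    then obtain x where "x \<in> eval_word w" by blast
    then have "x $ i = 1" "x $ i = -1" using i unfolding eval_eq val_def by force+
    then show False by simp
  qed
qed

lemma set_det1:
  assumes "\<not> conflict v" "eval_word u = eval_word v" "g \<in> set u"
  shows "g \<in> set v"
proof (rule ccontr)
  assume g: "g \<notin> set v"
  obtain i s where gi: "g = (i,s)" by (cases g)
  have "wit v \<in> eval_word v" by (rule wit_in[OF assms(1)])
  then have "wit v \<in> eval_word u" using assms(2) by simp
  then have "\<forall>h\<in>set u. wit v $ fst h = val h" by (simp add: eval_eq)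
  then have "wit v $ fst g = val g" using assms(3) by blast
  then have w1: "wit v $ i = val (i,s)" using gi by simp
  have w2: "wit v $ i = (if (i,True) \<in> set v then 1 else if (i,False) \<in> set v then -1 else 0)"
    by (simp add: wit_def)
  show False
  proof (cases s)
    case True
    then have "(i,True) \<notin> set v" using g gi by simp
    then show False using w1 w2 True by (simp add: val_def split: if_splits)
  next
    case False
    then have "(i,False) \<notin> set v" using g gi by simp
    then show False using w1 w2 False by (simp add: val_def split: if_splits)
  qed
qed

lemma set_det:
  assumes "\<not> conflict u" "\<not> conflict v" "eval_word u = eval_word v"
  shows "set u = set v"
proof (intro set_eqI iffI)
  fix x assume "x \<in> set u" then show "x \<in> set v" by (rule set_det1[OF assms(2,3)])
next
  fix x assume "x \<in> set v" then show "x \<in> set u" by (rule set_det1[OF assms(1) assms(3)[symmetric]])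
qed

lemma facet_face: "facet (g::'n::finite gen) face_of cube"
proof -
  let ?a = "val g *\<^sub>R axis (fst g) (1::real)"
  have ip: "?a \<bullet> x = val g * x $ fst g" for x :: "real^'n"
    by (simp add: inner_axis')
  have "facet g = cube \<inter> {x. ?a \<bullet> x = 1}"
    unfolding facet_eq cube_eq ip by (cases "snd g") (auto simp: val_def)
  moreover have "(cube \<inter> {x. ?a \<bullet> x = 1}) face_of cube"
  proof (rule face_of_Int_supporting_hyperplane_le)
    show "convex (cube :: (real^'n) set)" by (simp add: cube_eq B_cbox convex_box)
    fix x :: "real^'n" assume "x \<in> cube"
    then have "\<bar>x $ fst g\<bar> \<le> 1" by (simp add: cube_eq B_def)
    then show "?a \<bullet> x \<le> 1" by (auto simp: abs_le_iff inner_axis' val_def)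
  qed
  ultimately show ?thesis by simp
qed

lemma eval_face: "eval_word w face_of cube"
proof (induction w)
  case Nil then show ?case by (simp add: eval_word_def cube_eq B_cbox convex_box face_of_refl)
next
  case (Cons g w)
  have "eval_word (g#w) = facet g \<inter> eval_word w" by (simp add: eval_word_def)
  then show ?case using face_of_Int[OF facet_face Cons.IH] by simp
qed


lemma C_ctx: "cong_gen R u v \<Longrightarrow> cong_gen R (x@u@y) (x@v@y)"
proof (induction rule: cong_gen.induct)
  case (base u v x' y')
  have "cong_gen R ((x@x')@u@(y'@y)) ((x@x')@v@(y'@y))" using cong_gen.base[of R u v "x@x'" "y'@y"] base by simp
  then show ?case by simp
next
  case (refl u) then show ?case by (rule cong_gen.refl)
next
  case (sym u v) then show ?case using cong_gen.sym by blast
next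
  case (trans u v w) then show ?case using cong_gen.trans by blast
qed

lemma C_ctx1: "cong_gen R u v \<Longrightarrow> cong_gen R (g#u) (g#v)"
  using C_ctx[of R u v "[g]" "[]"] by simp

lemma C_swap: "cong_gen cube_rel (g#h#y) (h#g#y)"
  using cong_gen.base[of cube_rel "[g,h]" "[h,g]" "[]" y, OF cube_rel.comm] by simp

lemma C_idem: "cong_gen cube_rel (g#g#y) (g#y)"
  using cong_gen.base[of cube_rel "[g,g]" "[g]" "[]" y, OF cube_rel.idem] by simp

lemma L1: "cong_gen cube_rel (g # xs @ ys) (xs @ g # ys)"
proof (induction xs)
  case Nil then show ?case by (simp add: cong_gen.refl)
next
  case (Cons h t)
  have "cong_gen cube_rel (g # h # t @ ys) (h # g # t @ ys)" by (rule C_swap)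
  moreover have "cong_gen cube_rel (h # g # t @ ys) (h # t @ g # ys)" by (rule C_ctx1[OF Cons.IH])
  ultimately show ?case by (simp add: cong_gen.trans)
qed

lemma L2: "cong_gen cube_rel (v@u) (u@v)"
proof (induction v)
  case Nil then show ?case by (simp add: cong_gen.refl)
next
  case (Cons g v)
  have "cong_gen cube_rel (g#v@u) (g#u@v)" by (rule C_ctx1[OF Cons.IH])
  moreover have "cong_gen cube_rel (g#u@v) (u@g#v)" by (rule L1)
  ultimately show ?case by (simp add: cong_gen.trans)
qed

lemma L3a: "g \<in> set w \<Longrightarrow> cong_gen cube_rel (g#w) w"
proof (induction w)
  case Nil then show ?case by simp
next
  case (Cons h t)
  show ?case
  proof (cases "g = h")
    case True then show ?thesis by (simp add: C_idem)
  next
    case False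
    then have "g \<in> set t" using Cons.prems by simp
    then have "cong_gen cube_rel (h#g#t) (h#t)" by (rule C_ctx1[OF Cons.IH])
    then show ?thesis using C_swap cong_gen.trans by blast
  qed
qed

lemma L3: "set v \<subseteq> set w \<Longrightarrow> cong_gen cube_rel (v@w) w"
proof (induction v)
  case Nil then show ?case by (simp add: cong_gen.refl)
next
  case (Cons g v)
  have "cong_gen cube_rel (g#v@w) (g#w)" using Cons by (intro C_ctx1) simp
  moreover have "cong_gen cube_rel (g#w) w" using Cons.prems by (intro L3a) simp
  ultimately show ?case by (simp add: cong_gen.trans)
qed

lemma Lset: assumes "set u = set v" shows "cong_gen cube_rel u v"
proof -
  have c1: "cong_gen cube_rel u (v@u)" using L3[of v u] assms by (simp add: cong_gen.sym)
  have c2: "cong_gen cube_rel (v@u) (u@v)" by (rule L2)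
  have c3: "cong_gen cube_rel (u@v) v" using L3[of u v] assms by simp
  show ?thesis by (rule cong_gen.trans[OF c1 cong_gen.trans[OF c2 c3]])
qed

lemma Lconf0: "cong_gen cube_rel ([(i,True),(i,False)] @ xs) [(i,True),(i,False)]"
proof (induction xs)
  case Nil then show ?case by (simp add: cong_gen.refl)
next
  case (Cons j xs)
  have "cong_gen cube_rel ([] @ [(i,True),(i,False)] @ xs) ([] @ [(i,True),(i,False),j] @ xs)"
    by (rule cong_gen.base[of cube_rel "[(i,True),(i,False)]" "[(i,True),(i,False),j]" "[]" xs, OF cube_rel.absorb])
  then have "cong_gen cube_rel ([(i,True),(i,False)] @ j # xs) ([(i,True),(i,False)] @ xs)"
    by (simp add: cong_gen.sym)
  then show ?case using Cons.IH by (rule cong_gen.trans)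
qed

lemma Lconf1: assumes "(i,True) \<in> set u" "(i,False) \<in> set u"
  shows "cong_gen cube_rel u [(i,True),(i,False)]"
proof -
  have "cong_gen cube_rel u ([(i,True),(i,False)] @ u)"
    using L3[of "[(i,True),(i,False)]" u] assms by (simp add: cong_gen.sym)
  then show ?thesis using Lconf0 by (rule cong_gen.trans)
qed

lemma Lconf: assumes "conflict u" "conflict v" shows "cong_gen cube_rel u v"
proof -
  obtain i where i: "(i,True) \<in> set u" "(i,False) \<in> set u" using assms(1) unfolding conflict_def by blast
  obtain k where k: "(k,True) \<in> set v" "(k,False) \<in> set v" using assms(2) unfolding conflict_def by blast
  let ?P = "[(i,True),(i,False)]" and ?Q = "[(k,True),(k,False)]"
  have c1: "cong_gen cube_rel u ?P" by (rule Lconf1[OF i])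
  have c2: "cong_gen cube_rel ?P (?P @ ?Q)" by (rule cong_gen.sym[OF Lconf0])
  have c3: "cong_gen cube_rel (?P @ ?Q) (?Q @ ?P)" by (rule L2)
  have c4: "cong_gen cube_rel (?Q @ ?P) ?Q" by (rule Lconf0)
  have c5: "cong_gen cube_rel ?Q v" by (rule cong_gen.sym[OF Lconf1[OF k]])
  show ?thesis by (rule cong_gen.trans[OF c1 cong_gen.trans[OF c2 cong_gen.trans[OF c3 cong_gen.trans[OF c4 c5]]]])
qed

lemma eval_set: "set u = set v \<Longrightarrow> eval_word u = eval_word v"
  by (simp add: eval_eq)

lemma sound: "cong_gen cube_rel u v \<Longrightarrow> eval_word u = eval_word v"
proof (induction rule: cong_gen.induct)
  case (base u v x y)
  then show ?case
  proof cases
    case (idem g) then show ?thesis by (intro eval_set) auto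
  next
    case (comm g h) then show ?thesis by (intro eval_set) auto
  next
    case (absorb i j)
    have "conflict (x@u@y)" "conflict (x@v@y)" unfolding conflict_def using absorb by auto
    then show ?thesis using eval_empty by metis
  qed
qed simp_all

lemma complete:
  assumes "eval_word u = eval_word v" shows "cong_gen cube_rel u v"
proof (cases "conflict u")
  case True
  then have "conflict v" using assms eval_empty by metis
  then show ?thesis using Lconf True by blast
next
  case False
  then have "\<not> conflict v" using assms eval_empty by metis
  then show ?thesis using set_det[OF False _ assms] Lset by blast
qed


definition sg :: "real \<Rightarrow> real" where "sg t = (if t > 0 then 1 else -1)"

lemma term_le: "\<bar>x\<bar> \<le> 1 \<Longrightarrow> a * x \<le> \<bar>a\<bar>" for a x :: real
proof -
  assume h: "\<bar>x\<bar> \<le> 1"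
  have "a * x \<le> \<bar>a * x\<bar>" by simp
  also have "\<dots> = \<bar>a\<bar> * \<bar>x\<bar>" by (simp add: abs_mult)
  also have "\<dots> \<le> \<bar>a\<bar> * 1" using h by (intro mult_left_mono) auto
  finally show ?thesis by simp
qed

lemma term_eq: "\<bar>x\<bar> \<le> 1 \<Longrightarrow> (a * x = \<bar>a\<bar>) \<longleftrightarrow> (a \<noteq> 0 \<longrightarrow> x = sg a)" for a x :: real
proof -
  assume h: "\<bar>x\<bar> \<le> 1"
  consider "a > 0" | "a < 0" | "a = 0" by linarith
  then show ?thesis
  proof cases
    case 1 then show ?thesis by (simp add: sg_def)
  next
    case 2
    have "a * x = - a \<longleftrightarrow> a * x = a * (-1)" by simp
    also have "\<dots> \<longleftrightarrow> x = -1" using 2 by (simp only: mult_cancel_left) simp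
    finally show ?thesis using 2 by (simp add: sg_def)
  qed simp
qed

lemma inner_sum: "a \<bullet> x = (\<Sum>i\<in>UNIV. a$i * x$i)" for a x :: "real^'n"
  by (simp add: inner_vec_def)

lemma key_le: "x \<in> B \<Longrightarrow> a \<bullet> x \<le> (\<Sum>i\<in>UNIV. \<bar>a$i\<bar>)" for a x :: "real^'n"
  unfolding inner_sum B_def by (intro sum_mono term_le) auto

lemma key_eq: assumes "x \<in> B"
  shows "a \<bullet> x = (\<Sum>i\<in>UNIV. \<bar>a$i\<bar>) \<longleftrightarrow> (\<forall>i. a$i \<noteq> 0 \<longrightarrow> x$i = sg (a$i))"
  (is "?L \<longleftrightarrow> ?R")
proof
  have xb: "\<bar>x$i\<bar> \<le> 1" for i using assms by (simp add: B_def)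
  assume ?L
  show ?R
  proof (rule ccontr)
    assume "\<not> ?R"
    then obtain k where "\<not> (a$k \<noteq> 0 \<longrightarrow> x$k = sg (a$k))" by blast
    then have "a$k * x$k \<noteq> \<bar>a$k\<bar>" using term_eq[OF xb[of k]] by blast
    then have lt: "a$k * x$k < \<bar>a$k\<bar>" using term_le[OF xb[of k], of "a$k"] by linarith
    have "(\<Sum>i\<in>UNIV. a$i * x$i) < (\<Sum>i\<in>UNIV. \<bar>a$i\<bar>)"
      by (rule sum_strict_mono_ex1) (use term_le[OF xb] lt in auto)
    then show False using \<open>?L\<close> unfolding inner_sum by simp
  qed
next
  have xb: "\<bar>x$i\<bar> \<le> 1" for i using assms by (simp add: B_def)
  assume ?R
  then have "a$i * x$i = \<bar>a$i\<bar>" for i using term_eq[OF xb[of i]] by blast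
  then show ?L unfolding inner_sum by simp
qed

lemma face_word:
  assumes F: "F face_of (cube :: (real^'n) set)"
  shows "\<exists>w. eval_word w = F"
proof -
  have "polyhedron (cube :: (real^'n) set)" by (simp add: cube_eq B_cbox)
  then have "F exposed_face_of cube" using F exposed_face_of_polyhedron by blast
  then obtain a b where ab: "cube \<subseteq> {x. a \<bullet> x \<le> b}" "F = cube \<inter> {x. a \<bullet> x = b}"
    unfolding exposed_face_of_def by blast
  show ?thesis
  proof (cases "F = {}")
    case True
    fix i :: 'n
    have "conflict [(i,True),(i,False)]" unfolding conflict_def by auto
    then have "eval_word [(i,True),(i,False)] = {}" using eval_empty by blast
    then show ?thesis using True by blast
  next
    case False
    then obtain y where y: "y \<in> F" by blast
    define z :: "real^'n" where "z = (\<chi> i. if a$i = 0 then 0 else sg (a$i))"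
    have zB: "z \<in> B" unfolding B_def z_def by (auto simp: sg_def)
    have zeq: "a \<bullet> z = (\<Sum>i\<in>UNIV. \<bar>a$i\<bar>)" using key_eq[OF zB] by (simp add: z_def)
    have yB: "y \<in> B" and yb: "a \<bullet> y = b" using y ab(2) cube_eq by auto
    have "b \<le> (\<Sum>i\<in>UNIV. \<bar>a$i\<bar>)" using key_le[OF yB, of a] yb by simp
    moreover have "a \<bullet> z \<le> b" using ab(1) zB cube_eq by auto
    ultimately have bsum: "b = (\<Sum>i\<in>UNIV. \<bar>a$i\<bar>)" using zeq by simp
    define S where "S = {(i, 0 < a$i) | i. a$i \<noteq> 0}"
    have "finite S" by (rule finite_subset[of _ UNIV]) auto
    then obtain w where w: "set w = S" using finite_list by blast
    have "eval_word w = F"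
    proof (intro set_eqI)
      fix x :: "real^'n"
      have "x \<in> eval_word w \<longleftrightarrow> x \<in> B \<and> (\<forall>i. a$i \<noteq> 0 \<longrightarrow> x$i = sg (a$i))"
        unfolding eval_eq w S_def by (auto simp: val_def sg_def)
      also have "\<dots> \<longleftrightarrow> x \<in> F"
        unfolding ab(2) cube_eq bsum using key_eq by blast
      finally show "x \<in> eval_word w \<longleftrightarrow> x \<in> F" .
    qed
    then show ?thesis by blast
  qed
qed

theorem mainTheorem8:
  shows "(\<forall>w :: 'n gen list. eval_word w \<in> face_monoid)
       \<and> (\<forall>F \<in> (face_monoid :: (real ^ 'n) set set). \<exists>w. eval_word w = F)
       \<and> (\<forall>u v :: 'n gen list. eval_word u = eval_word v \<longleftrightarrow> cong_gen cube_rel u v)"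
proof (intro conjI allI ballI iffI)
  fix w :: "'n gen list"
  show "eval_word w \<in> face_monoid" unfolding face_monoid_def using eval_face by blast
next
  fix F assume "F \<in> (face_monoid :: (real ^ 'n) set set)"
  then show "\<exists>w. eval_word w = F" unfolding face_monoid_def using face_word by blast
next
  fix u v :: "'n gen list"
  assume "eval_word u = eval_word v" then show "cong_gen cube_rel u v" by (rule complete)
next
  fix u v :: "'n gen list"
  assume "cong_gen cube_rel u v" then show "eval_word u = eval_word v" by (rule sound)
qed

end
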